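(* Suppose $\Sigma$ is of type-H. Let $\xi$ be any measure, and let $\lambda,\lambda_1,\lambda_2\in\mathbb R$. Define $q_\xi^*=c_{\xi00}-(c_{\xi01},c_{\xi02})\,Q_\xi^+\,(c_{\xi10},c_{\xi20})'$ and, with $\ell_\lambda=(1,\lambda,\lambda)'$, $\ell_2=(0,1,1)'$, $q_{\xi,2}^*=\ell_\lambda'V_\xi\ell_\lambda-(\ell_\lambda'V_\xi\ell_2)^2(\ell_2'V_\xi\ell_2)^+$. Then $q_{\xi,2}^*=q_\xi^*$. Moreover, if $1+2\lambda\ne0$ and $1+\lambda_1+\lambda_2\ne0$, define, with $\ell_3=(2,-1,-1)'$, $q_{\xi,3}^*=\ell_\lambda'V_\xi\ell_\lambda-(\ell_\lambda'V_\xi\ell_3)^2(\ell_3'V_\xi\ell_3)^+$, and with $\ell=(1,\lambda_1,\lambda_2)'$, $\ell_0=(-1,1+\lambda_2,-\lambda_2)'$, $\ell_1=(-1,-\lambda_1,1+\lambda_1)'$, $L_0=(\ell_0,\ell_1)$, $q_{\xi,1}^*=\ell'V_\xi\ell-\ell'V_\xi L_0(L_0'V_\xi L_0)^+L_0'V_\xi\ell$. Then $(1+2\lambda)^{-2}q_{\xi,3}^*=(1+\lambda_1+\lambda_2)^{-2}q_{\xi,1}^*$.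
   Context: Fix integers $k\ge 2$ and $t\ge 2$. Let $\mathcal S$ be the set of all $t^k$ sequences $s=(t_1,\dots,t_k)$ with entries $t_j\in\{1,\dots,t\}$. For $s\in\mathcal S$ let $T_s$ be the $k\times t$ matrix with $(j,i)$ entry equal to $1$ if $t_j=i$ and $0$ otherwise; let $H$ be the $k\times k$ matrix with $(i,j)$ entry $1$ if $i\equiv j+1\pmod k$ and $0$ otherwise; put $L_s=HT_s$, $R_s=H'T_s$ (a prime denotes transpose). Let $\Sigma$ be a fixed $k\times k$ positive definite matrix, $1_k$ the all-ones vector, and $\tilde B=\Sigma^{-1}-\Sigma^{-1}1_k1_k'\Sigma^{-1}/(1_k'\Sigma^{-1}1_k)$. With $G_0=T_s,G_1=L_s,G_2=R_s$ define for $0\le i,j\le 2$ the $t\times t$ matrices $C_{sij}=G_i'\tilde BG_j$. A measure is a vector $\xi=(p_s)_{s\in\mathcal S}$ with $p_s\ge0$, $\sum_sp_s=1$. Put $C_{\xi ij}=\sum_sp_sC_{sij}$, $c_{\xi ij}=\operatorname{tr}(C_{\xi ij})$, $V_\xi=(c_{\xi ij})_{0\le i,j\le2}$, $Q_\xi=(c_{\xi ij})_{1\le i,j\le2}$. $M^+$ denotes the Moore–Penrose inverse (for a scalar $a$, $a^+=1/a$ if $a\ne0$ and $0^+=0$). The matrix $\Sigma$ is of type-H if $\Sigma=I_k+\eta1_k'+1_k\eta'$ for some $\eta\in\mathbb R^k$ (and is positive definite). *)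

theory Defs
  imports "Jordan_Normal_Form.Matrix"
begin

definition mtrace :: "real mat \<Rightarrow> real" where
  "mtrace A = (\<Sum>i<dim_row A. A $$ (i, i))"

definition minv :: "real mat \<Rightarrow> real mat" where
  "minv A = (THE X. X \<in> carrier_mat (dim_row A) (dim_row A) \<and>
                    A * X = 1\<^sub>m (dim_row A) \<and> X * A = 1\<^sub>m (dim_row A))"

definition mp_inv :: "real mat \<Rightarrow> real mat" where
  "mp_inv A = (THE X. X \<in> carrier_mat (dim_col A) (dim_row A) \<and>
       A * X * A = A \<and> X * A * X = X \<and>
       transpose_mat (A * X) = A * X \<and> transpose_mat (X * A) = X * A)"

definition sc_pinv :: "real \<Rightarrow> real" where
  "sc_pinv a = (if a \<noteq> 0 then 1 / a else 0)"

definition pos_def_mat :: "nat \<Rightarrow> real mat \<Rightarrow> bool" where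
  "pos_def_mat k S \<longleftrightarrow> S \<in> carrier_mat k k \<and> transpose_mat S = S \<and>
     (\<forall>x \<in> carrier_vec k. x \<noteq> 0\<^sub>v k \<longrightarrow> x \<bullet> (S *\<^sub>v x) > 0)"

definition type_H :: "nat \<Rightarrow> real mat \<Rightarrow> bool" where
  "type_H k S \<longleftrightarrow> pos_def_mat k S \<and>
     (\<exists>eta \<in> carrier_vec k. S = 1\<^sub>m k + mat k k (\<lambda>(i, j). eta $ i) + mat k k (\<lambda>(i, j). eta $ j))"

definition seqs :: "nat \<Rightarrow> nat \<Rightarrow> nat list set" where
  "seqs k t = {s. length s = k \<and> set s \<subseteq> {1..t}}"

(* T_s : k x t, entry (j,i) = 1 iff t_j = i   (0-based indices, i.e. t_{j+1} = i+1) *)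
definition Tmat :: "nat \<Rightarrow> nat \<Rightarrow> nat list \<Rightarrow> real mat" where
  "Tmat k t s = mat k t (\<lambda>(j, i). if s ! j = i + 1 then 1 else 0)"

definition Hmat :: "nat \<Rightarrow> real mat" where
  "Hmat k = mat k k (\<lambda>(i, j). if i mod k = (j + 1) mod k then 1 else 0)"

definition Bt :: "nat \<Rightarrow> real mat \<Rightarrow> real mat" where
  "Bt k S = minv S - (1 / (vec k (\<lambda>_. 1) \<bullet> (minv S *\<^sub>v vec k (\<lambda>_. 1)))) \<cdot>\<^sub>m
      (minv S * mat k k (\<lambda>_. 1) * minv S)"

(* G_0 = T_s, G_1 = L_s = H T_s, G_2 = R_s = H' T_s *)
definition Gmat :: "nat \<Rightarrow> nat \<Rightarrow> nat list \<Rightarrow> nat \<Rightarrow> real mat" where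
  "Gmat k t s i = (if i = 0 then Tmat k t s
                   else if i = 1 then Hmat k * Tmat k t s
                   else transpose_mat (Hmat k) * Tmat k t s)"

definition Cs :: "nat \<Rightarrow> nat \<Rightarrow> real mat \<Rightarrow> nat list \<Rightarrow> nat \<Rightarrow> nat \<Rightarrow> real mat" where
  "Cs k t S s i j = transpose_mat (Gmat k t s i) * Bt k S * Gmat k t s j"

definition is_measure :: "nat \<Rightarrow> nat \<Rightarrow> (nat list \<Rightarrow> real) \<Rightarrow> bool" where
  "is_measure k t p \<longleftrightarrow> (\<forall>s \<in> seqs k t. p s \<ge> 0) \<and> (\<Sum>s \<in> seqs k t. p s) = 1"

definition Cxi :: "nat \<Rightarrow> nat \<Rightarrow> real mat \<Rightarrow> (nat list \<Rightarrow> real) \<Rightarrow> nat \<Rightarrow> nat \<Rightarrow> real mat" where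
  "Cxi k t S p i j = mat t t (\<lambda>(a, b). \<Sum>s \<in> seqs k t. p s * (Cs k t S s i j) $$ (a, b))"

definition cxi :: "nat \<Rightarrow> nat \<Rightarrow> real mat \<Rightarrow> (nat list \<Rightarrow> real) \<Rightarrow> nat \<Rightarrow> nat \<Rightarrow> real" where
  "cxi k t S p i j = mtrace (Cxi k t S p i j)"

definition Vxi :: "nat \<Rightarrow> nat \<Rightarrow> real mat \<Rightarrow> (nat list \<Rightarrow> real) \<Rightarrow> real mat" where
  "Vxi k t S p = mat 3 3 (\<lambda>(i, j). cxi k t S p i j)"

definition Qxi :: "nat \<Rightarrow> nat \<Rightarrow> real mat \<Rightarrow> (nat list \<Rightarrow> real) \<Rightarrow> real mat" where
  "Qxi k t S p = mat 2 2 (\<lambda>(i, j). cxi k t S p (i + 1) (j + 1))"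

definition qstar :: "nat \<Rightarrow> nat \<Rightarrow> real mat \<Rightarrow> (nat list \<Rightarrow> real) \<Rightarrow> real" where
  "qstar k t S p = cxi k t S p 0 0 -
     vec_of_list [cxi k t S p 0 1, cxi k t S p 0 2] \<bullet>
       (mp_inv (Qxi k t S p) *\<^sub>v vec_of_list [cxi k t S p 1 0, cxi k t S p 2 0])"

definition qvec :: "real mat \<Rightarrow> real vec \<Rightarrow> real vec \<Rightarrow> real" where
  "qvec V l m = l \<bullet> (V *\<^sub>v l) - (l \<bullet> (V *\<^sub>v m))^2 * sc_pinv (m \<bullet> (V *\<^sub>v m))"

definition qstar2 :: "nat \<Rightarrow> nat \<Rightarrow> real mat \<Rightarrow> (nat list \<Rightarrow> real) \<Rightarrow> real \<Rightarrow> real" where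
  "qstar2 k t S p lam = qvec (Vxi k t S p) (vec_of_list [1, lam, lam]) (vec_of_list [0, 1, 1])"

definition qstar3 :: "nat \<Rightarrow> nat \<Rightarrow> real mat \<Rightarrow> (nat list \<Rightarrow> real) \<Rightarrow> real \<Rightarrow> real" where
  "qstar3 k t S p lam = qvec (Vxi k t S p) (vec_of_list [1, lam, lam]) (vec_of_list [2, -1, -1])"

definition qstar1 :: "nat \<Rightarrow> nat \<Rightarrow> real mat \<Rightarrow> (nat list \<Rightarrow> real) \<Rightarrow> real \<Rightarrow> real \<Rightarrow> real" where
  "qstar1 k t S p l1 l2 =
     (let V = Vxi k t S p; l = vec_of_list [1, l1, l2];
          L0 = mat_of_cols 3 [vec_of_list [-1, 1 + l2, -l2], vec_of_list [-1, -l1, 1 + l1]]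
      in l \<bullet> (V *\<^sub>v l) -
         (transpose_mat L0 *\<^sub>v (V *\<^sub>v l)) \<bullet>
           (mp_inv (transpose_mat L0 * V * L0) *\<^sub>v (transpose_mat L0 *\<^sub>v (V *\<^sub>v l))))"

end

theory Submission
  imports Defs "Jordan_Normal_Form.Determinant"
begin

lemma mp_unique:
  fixes A X Y :: "real mat"
  assumes A: "A \<in> carrier_mat m n" and X: "X \<in> carrier_mat n m" and Y: "Y \<in> carrier_mat n m"
  and x1: "A * X * A = A" and x2: "X * A * X = X" and x3: "transpose_mat (A * X) = A * X"
  and x4: "transpose_mat (X * A) = X * A"
  and y1: "A * Y * A = A" and y2: "Y * A * Y = Y" and y3: "transpose_mat (A * Y) = A * Y"
  and y4: "transpose_mat (Y * A) = Y * A"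
  shows "X = Y"
proof -
  have Xt: "transpose_mat X \<in> carrier_mat m n" and Yt: "transpose_mat Y \<in> carrier_mat m n"
    and At: "transpose_mat A \<in> carrier_mat n m" using A X Y by auto
  have tAX: "A*X = transpose_mat X * transpose_mat A" using A X x3 by (metis transpose_mult)
  have tAY: "A*Y = transpose_mat Y * transpose_mat A" using A Y y3 by (metis transpose_mult)
  have tYA: "Y*A = transpose_mat A * transpose_mat Y" using A Y y4 by (metis transpose_mult)
  have tXA: "X*A = transpose_mat A * transpose_mat X" using A X x4 by (metis transpose_mult)
  have tA': "transpose_mat A = transpose_mat A * (transpose_mat Y * transpose_mat A)"
  proof -
    have "transpose_mat A = transpose_mat (A * Y * A)" using y1 by simp
    also have "\<dots> = transpose_mat A * transpose_mat (A * Y)"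
      using A Y by (intro transpose_mult) auto
    finally show ?thesis using tAY y3 by simp
  qed
  have tA2': "transpose_mat A = (transpose_mat A * transpose_mat X) * transpose_mat A"
  proof -
    have "transpose_mat A = transpose_mat (A * X * A)" using x1 by simp
    also have "\<dots> = transpose_mat (A * (X * A))" using A X by simp
    also have "\<dots> = transpose_mat (X * A) * transpose_mat A"
      using A X by (intro transpose_mult) auto
    finally show ?thesis using tXA x4 by simp
  qed
  have "X = X * (A * X)" using x2 A X by simp
  also have "\<dots> = X * (transpose_mat X * transpose_mat A)" using tAX by simp
  also have "\<dots> = X * (transpose_mat X * (transpose_mat A * (transpose_mat Y * transpose_mat A)))"
    using tA' by simp
  also have "\<dots> = (X * (transpose_mat X * transpose_mat A)) * (transpose_mat Y * transpose_mat A)"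
    by (simp only: assoc_mult_mat[OF X mult_carrier_mat[OF Xt At] mult_carrier_mat[OF Yt At]] assoc_mult_mat[OF Xt At mult_carrier_mat[OF Yt At]])
  also have "\<dots> = (X * (A * X)) * (A * Y)" using tAX tAY by simp
  also have "\<dots> = (X * A * X) * (A * Y)" using A X by simp
  also have "\<dots> = X * A * Y" using x2 A X Y by simp
  finally have eX: "X = X * A * Y" .
  have "Y = (Y * A) * Y" using y2 A Y by simp
  also have "\<dots> = (transpose_mat A * transpose_mat Y) * Y" using tYA by simp
  also have "\<dots> = ((transpose_mat A * transpose_mat X) * transpose_mat A) * transpose_mat Y * Y"
    using tA2' by simp
  also have "\<dots> = (transpose_mat A * transpose_mat X) * (transpose_mat A * transpose_mat Y) * Y"
    by (simp only: assoc_mult_mat[OF mult_carrier_mat[OF At Xt] At Yt])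
  also have "\<dots> = (X * A) * (Y * A) * Y" using tXA tYA by simp
  also have "\<dots> = X * A * (Y * A * Y)" by (rule assoc_mult_mat[OF mult_carrier_mat[OF X A] mult_carrier_mat[OF Y A] Y])
  also have "\<dots> = X * A * Y" using y2 by simp
  finally show ?thesis using eX by simp
qed

definition mg :: "real \<Rightarrow> real \<Rightarrow> real \<Rightarrow> real \<Rightarrow> real mat" where
  "mg a b c d = mat 2 2 (\<lambda>(i,j). if i = 0 then (if j = 0 then a else b) else (if j = 0 then c else d))"

definition pinv2 :: "real \<Rightarrow> real \<Rightarrow> real \<Rightarrow> real mat" where
  "pinv2 a b d = (if a*d - b*b \<noteq> 0 then mg (d/(a*d-b*b)) (-b/(a*d-b*b)) (-b/(a*d-b*b)) (a/(a*d-b*b))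
     else mg (a/(a+d)^2) (b/(a+d)^2) (b/(a+d)^2) (d/(a+d)^2))"

lemma lt2: "i < (2::nat) \<longleftrightarrow> i = 0 \<or> i = 1" by auto

lemma mg_mult: "mg a b c d * mg a' b' c' d' = mg (a*a'+b*c') (a*b'+b*d') (c*a'+d*c') (c*b'+d*d')"
  by (rule eq_matI) (auto simp: mg_def scalar_prod_def lt2 numeral_2_eq_2)

lemma mg_transpose: "transpose_mat (mg a b c d) = mg a c b d"
  by (rule eq_matI) (auto simp: mg_def lt2)

lemma mg_eq: "mg a b c d = mg a' b' c' d' \<longleftrightarrow> a = a' \<and> b = b' \<and> c = c' \<and> d = d'"
proof
  assume e: "mg a b c d = mg a' b' c' d'"
  have "mg a b c d $$ (0,0) = mg a' b' c' d' $$ (0,0)" "mg a b c d $$ (0,1) = mg a' b' c' d' $$ (0,1)"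
    "mg a b c d $$ (1,0) = mg a' b' c' d' $$ (1,0)" "mg a b c d $$ (1,1) = mg a' b' c' d' $$ (1,1)"
    using e by auto
  then show "a = a' \<and> b = b' \<and> c = c' \<and> d = d'" by (simp add: mg_def)
qed auto

lemma mg_carrier[simp]: "mg a b c d \<in> carrier_mat 2 2" by (simp add: mg_def)

lemma mg_one: "1\<^sub>m 2 = mg 1 0 0 1" by (rule eq_matI) (auto simp: mg_def lt2)

lemma mp_inv_eqI:
  assumes A: "A \<in> carrier_mat m n" and X: "X \<in> carrier_mat n m"
  and x1: "A * X * A = A" and x2: "X * A * X = X" and x3: "transpose_mat (A * X) = A * X"
  and x4: "transpose_mat (X * A) = X * A"
  shows "mp_inv A = X"
  unfolding mp_inv_def
proof (rule the_equality)
  show "X \<in> carrier_mat (dim_col A) (dim_row A) \<and> A * X * A = A \<and> X * A * X = X \<and>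
    transpose_mat (A * X) = A * X \<and> transpose_mat (X * A) = X * A" using assms by auto
  fix Y assume "Y \<in> carrier_mat (dim_col A) (dim_row A) \<and> A * Y * A = A \<and> Y * A * Y = Y \<and>
    transpose_mat (A * Y) = A * Y \<and> transpose_mat (Y * A) = Y * A"
  then show "Y = X" using mp_unique[OF A X _ x1 x2 x3 x4] A by auto
qed

lemma mp_inv_m2: "mp_inv (mg a b b d) = pinv2 a b d"
proof (cases "a*d - b*b = 0")
  case False
  let ?D = "a*d-b*b"
  have P: "pinv2 a b d = mg (d/?D) (-b/?D) (-b/?D) (a/?D)" using False by (simp add: pinv2_def)
  have e: "mg a b b d * pinv2 a b d = 1\<^sub>m 2" "pinv2 a b d * mg a b b d = 1\<^sub>m 2"
    unfolding P mg_mult mg_one mg_eq using False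
    by (auto simp: diff_divide_distrib[symmetric] add_divide_distrib[symmetric] algebra_simps)
  have c: "pinv2 a b d \<in> carrier_mat 2 2" unfolding P by simp
  show ?thesis
  proof (rule mp_inv_eqI[of _ 2 2])
    show "mg a b b d * pinv2 a b d * mg a b b d = mg a b b d" unfolding e mg_one mg_mult by simp
    show "pinv2 a b d * mg a b b d * pinv2 a b d = pinv2 a b d" unfolding e using c by simp
    show "transpose_mat (mg a b b d * pinv2 a b d) = mg a b b d * pinv2 a b d" unfolding e by simp
    show "transpose_mat (pinv2 a b d * mg a b b d) = pinv2 a b d * mg a b b d" unfolding e by simp
  qed (use c in auto)
next
  case True
  let ?t = "a + d"
  have P: "pinv2 a b d = mg (a/?t^2) (b/?t^2) (b/?t^2) (d/?t^2)" using True by (simp add: pinv2_def)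
  show ?thesis
  proof (cases "?t = 0")
    case t: True
    have d: "d = -a" using t by linarith
    have "a*a + b*b = -(a*d-b*b) + a*(a+d)" by (simp add: algebra_simps)
    then have h: "a*a + b*b = 0" using True t by simp
    have "a = 0 \<and> b = 0" using h by (simp only: sum_squares_eq_zero_iff)
    then have "a = 0" "b = 0" by auto
    with d have "a = 0" "d = 0" "b = 0" by auto
    then show ?thesis unfolding P
      by (intro mp_inv_eqI[of _ 2 2]) (auto simp: mg_transpose mg_mult)
  next
    case t: False
    have bb: "b*b = a*d" using True by simp
    define s where "s = 1 / ?t^2"
    have s: "s * (a+d)^2 = 1" using t by (simp add: s_def)
    have P': "pinv2 a b d = mg (s*a) (s*b) (s*b) (s*d)" unfolding P s_def by simp
    have e1: "a*a+b*b = (a+d)*a" "a*b+b*d = (a+d)*b" "b*a+d*b = (a+d)*b" "b*b+d*d = (a+d)*d"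
      using bb by (simp_all add: algebra_simps)
    have MX: "mg a b b d * mg (s*a) (s*b) (s*b) (s*d) = mg (s*?t*a) (s*?t*b) (s*?t*b) (s*?t*d)"
      unfolding mg_mult mg_eq using e1 by (simp add: algebra_simps)
    have XM: "mg (s*a) (s*b) (s*b) (s*d) * mg a b b d = mg (s*?t*a) (s*?t*b) (s*?t*b) (s*?t*d)"
      unfolding mg_mult mg_eq using e1 by (simp add: algebra_simps)
    have MXM: "mg (s*?t*a) (s*?t*b) (s*?t*b) (s*?t*d) * mg a b b d = mg a b b d"
    proof -
      have "mg (s*?t*a) (s*?t*b) (s*?t*b) (s*?t*d) * mg a b b d
         = mg (s*?t*(a*a+b*b)) (s*?t*(a*b+b*d)) (s*?t*(b*a+d*b)) (s*?t*(b*b+d*d))"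
        unfolding mg_mult mg_eq by (simp add: algebra_simps)
      also have "\<dots> = mg (s*?t^2*a) (s*?t^2*b) (s*?t^2*b) (s*?t^2*d)"
        unfolding e1 by (simp add: power2_eq_square mult.assoc)
      finally show ?thesis using s by simp
    qed
    have XMX: "mg (s*?t*a) (s*?t*b) (s*?t*b) (s*?t*d) * mg (s*a) (s*b) (s*b) (s*d) = mg (s*a) (s*b) (s*b) (s*d)"
    proof -
      have "mg (s*?t*a) (s*?t*b) (s*?t*b) (s*?t*d) * mg (s*a) (s*b) (s*b) (s*d)
         = mg (s*s*?t*(a*a+b*b)) (s*s*?t*(a*b+b*d)) (s*s*?t*(b*a+d*b)) (s*s*?t*(b*b+d*d))"
        unfolding mg_mult mg_eq by (simp add: algebra_simps)
      also have "\<dots> = mg ((s*?t^2)*(s*a)) ((s*?t^2)*(s*b)) ((s*?t^2)*(s*b)) ((s*?t^2)*(s*d))"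
        unfolding e1 mg_eq by (simp add: power2_eq_square algebra_simps)
      finally show ?thesis using s by simp
    qed
    show ?thesis unfolding P'
    proof (rule mp_inv_eqI[of _ 2 2])
      show "mg a b b d * mg (s*a) (s*b) (s*b) (s*d) * mg a b b d = mg a b b d" unfolding MX MXM ..
      show "mg (s*a) (s*b) (s*b) (s*d) * mg a b b d * mg (s*a) (s*b) (s*b) (s*d) = mg (s*a) (s*b) (s*b) (s*d)"
        unfolding XM XMX ..
    qed (auto simp: MX XM mg_transpose)
  qed
qed

definition V3 :: "real \<Rightarrow> real \<Rightarrow> real \<Rightarrow> real mat" where
  "V3 a b c = mat 3 3 (\<lambda>(i,j). if i = j then a else if i = 0 \<or> j = 0 then b else c)"

lemma lt3: "i < (3::nat) \<longleftrightarrow> i = 0 \<or> i = 1 \<or> i = 2" by auto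

lemma V3_mult_vec: "V3 a b c *\<^sub>v vec_of_list [x,y,z] = vec_of_list [a*x+b*y+b*z, b*x+a*y+c*z, b*x+c*y+a*z]"
  by (rule eq_vecI) (auto simp: V3_def scalar_prod_def lt3 numeral_3_eq_3 mult_mat_vec_def less_Suc_eq)

lemma sp3: "vec_of_list [x,y,z] \<bullet> vec_of_list [x',y',z'] = x*x'+y*y'+(z*z' :: real)"
  by (simp add: scalar_prod_def numeral_3_eq_3)

lemma sp2: "vec_of_list [x,y] \<bullet> vec_of_list [x',y'] = x*x'+(y*y' :: real)"
  by (simp add: scalar_prod_def numeral_2_eq_2)

lemma mg_mult_vec: "mg a b c d *\<^sub>v vec_of_list [x,y] = vec_of_list [a*x+b*y, c*x+d*y]"
  by (rule eq_vecI) (auto simp: mg_def scalar_prod_def lt2 numeral_2_eq_2 mult_mat_vec_def less_Suc_eq)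

lemma LVL:
  fixes P Q :: "real vec"
  assumes P: "P \<in> carrier_vec n" and Q: "Q \<in> carrier_vec n" and V: "V \<in> carrier_mat n n"
  shows "transpose_mat (mat_of_cols n [P,Q]) * V * mat_of_cols n [P,Q] =
     mg (P \<bullet> (V *\<^sub>v P)) (P \<bullet> (V *\<^sub>v Q)) (Q \<bullet> (V *\<^sub>v P)) (Q \<bullet> (V *\<^sub>v Q))"
proof -
  let ?L = "mat_of_cols n [P,Q]"
  have L: "?L \<in> carrier_mat n 2" using mat_of_cols_carrier(1)[of n "[P,Q]"] by (simp add: numeral_2_eq_2)
  have "transpose_mat ?L * V * ?L = transpose_mat ?L * (V * ?L)" using L V by simp
  also have "\<dots> = mg (P \<bullet> (V *\<^sub>v P)) (P \<bullet> (V *\<^sub>v Q)) (Q \<bullet> (V *\<^sub>v P)) (Q \<bullet> (V *\<^sub>v Q))"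
  proof (rule eq_matI)
    fix i j assume i: "i < dim_row (mg (P \<bullet> (V *\<^sub>v P)) (P \<bullet> (V *\<^sub>v Q)) (Q \<bullet> (V *\<^sub>v P)) (Q \<bullet> (V *\<^sub>v Q)))"
      and j: "j < dim_col (mg (P \<bullet> (V *\<^sub>v P)) (P \<bullet> (V *\<^sub>v Q)) (Q \<bullet> (V *\<^sub>v P)) (Q \<bullet> (V *\<^sub>v Q)))"
    have i2: "i < 2" and j2: "j < 2" using i j by (auto simp: mg_def)
    have "(transpose_mat ?L * (V * ?L)) $$ (i,j) = col ?L i \<bullet> (V *\<^sub>v col ?L j)"
      using i2 j2 L V by (simp add: col_mult2[OF V L j2])
    then show "(transpose_mat ?L * (V * ?L)) $$ (i,j) = mg (P \<bullet> (V *\<^sub>v P)) (P \<bullet> (V *\<^sub>v Q)) (Q \<bullet> (V *\<^sub>v P)) (Q \<bullet> (V *\<^sub>v Q)) $$ (i,j)"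
      using i2 j2 P Q by (auto simp: lt2 mg_def)
  qed (use L in \<open>auto simp: mg_def\<close>)
  finally show ?thesis .
qed

lemma Lt_vec:
  fixes P Q :: "real vec"
  assumes P: "P \<in> carrier_vec n" and Q: "Q \<in> carrier_vec n" and w: "w \<in> carrier_vec n"
  shows "transpose_mat (mat_of_cols n [P,Q]) *\<^sub>v w = vec_of_list [P \<bullet> w, Q \<bullet> w]"
  by (rule eq_vecI) (use P Q w in \<open>auto simp: lt2 less_Suc_eq\<close>)

definition psd3 :: "real \<Rightarrow> real \<Rightarrow> real \<Rightarrow> bool" where
  "psd3 a b c \<longleftrightarrow> (\<forall>x y z. a*(x*x+y*y+z*z) + 2*b*(x*y+x*z) + 2*c*(y*z) \<ge> 0)"

lemma quad_lin0:
  fixes \<alpha> \<beta> :: real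
  assumes "\<forall>t. \<alpha>*t*t + \<beta>*t \<ge> 0" shows "\<beta> = 0"
proof (rule ccontr)
  assume nz: "\<beta> \<noteq> 0"
  have "\<alpha> + \<beta> \<ge> 0" "\<alpha> - \<beta> \<ge> 0" using assms[rule_format, of 1] assms[rule_format, of "-1"] by auto
  then have a: "\<alpha> + 1 > 0" by linarith
  define t where "t = -\<beta>/(\<alpha>+1)"
  have tu: "t*(\<alpha>+1) = -\<beta>" using a unfolding t_def by simp
  have "(\<alpha>*t*t + \<beta>*t)*((\<alpha>+1)*(\<alpha>+1)) = \<alpha>*(t*(\<alpha>+1))*(t*(\<alpha>+1)) + \<beta>*(t*(\<alpha>+1))*(\<alpha>+1)"
    by (simp add: algebra_simps)
  also have "\<dots> = -(\<beta>*\<beta>)" unfolding tu by (simp add: algebra_simps)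
  also have "\<dots> < 0" using nz by (auto simp: zero_less_mult_iff linorder_neq_iff)
  finally have neg: "(\<alpha>*t*t + \<beta>*t)*((\<alpha>+1)*(\<alpha>+1)) < 0" .
  have "(\<alpha>*t*t + \<beta>*t)*((\<alpha>+1)*(\<alpha>+1)) \<ge> 0"
    using assms[rule_format, of t] a by simp
  then show False using neg by linarith
qed

lemma psd_F1: assumes "psd3 a b c" "a + c = 0" shows "b = 0"
proof -
  have "\<forall>t. a*t*t + (4*b)*t \<ge> 0"
  proof
    fix t
    have "a*(t*t+1*1+1*1) + 2*b*(t*1+t*1) + 2*c*(1*1) \<ge> 0" using assms(1) unfolding psd3_def by blast
    moreover have "a*(t*t+1*1+1*1) + 2*b*(t*1+t*1) + 2*c*(1*1) = a*t*t + (4*b)*t + 2*(a+c)"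
      by (simp add: algebra_simps)
    ultimately show "a*t*t + (4*b)*t \<ge> 0" using assms(2) by simp
  qed
  then have "4*b = 0" by (rule quad_lin0)
  then show ?thesis by simp
qed

lemma psd_F2: assumes "psd3 a b c" "6*a - 8*b + 2*c = 0" shows "b = a" "c = a"
proof -
  have "\<forall>t. a*t*t + (4*a-4*b)*t \<ge> 0"
  proof
    fix t
    have "a*((t+2)*(t+2)+(-1)*(-1)+(-1)*(-1)) + 2*b*((t+2)*(-1)+(t+2)*(-1)) + 2*c*((-1)*(-1)) \<ge> 0"
      using assms(1) unfolding psd3_def by blast
    moreover have "a*((t+2)*(t+2)+(-1)*(-1)+(-1)*(-1)) + 2*b*((t+2)*(-1)+(t+2)*(-1)) + 2*c*((-1)*(-1))
       = a*t*t + (4*a-4*b)*t + (6*a - 8*b + 2*c)"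
      by (simp add: algebra_simps)
    ultimately show "a*t*t + (4*a-4*b)*t \<ge> 0" using assms(2) by simp
  qed
  then have "4*a-4*b = 0" by (rule quad_lin0)
  then show "b = a" by simp
  then show "c = a" using assms(2) by simp
qed

lemma V3_carrier[simp]: "V3 a b c \<in> carrier_mat 3 3" by (simp add: V3_def)

lemma vol_carrier[simp]: "vec_of_list [x,y,z::real] \<in> carrier_vec 3" by (simp add: carrier_dim_vec)

lemma core1:
  fixes a b c lam :: real
  assumes "psd3 a b c"
  shows "qvec (V3 a b c) (vec_of_list [1, lam, lam]) (vec_of_list [0, 1, 1])
    = a - vec_of_list [b,b] \<bullet> (mp_inv (mg a c c a) *\<^sub>v vec_of_list [b,b])"
proof -
  have L: "qvec (V3 a b c) (vec_of_list [1, lam, lam]) (vec_of_list [0, 1, 1])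
     = a + 4*lam*b + 2*lam*lam*(a+c) - (2*b+2*lam*(a+c))^2 * sc_pinv (2*(a+c))"
    unfolding qvec_def V3_mult_vec sp3 by (simp add: algebra_simps)
  have R: "vec_of_list [b,b] \<bullet> (mp_inv (mg a c c a) *\<^sub>v vec_of_list [b,b]) = 2*b*b*sc_pinv (a+c)"
  proof (cases "a*a - c*c = 0")
    case False
    have f: "a*a - c*c = (a+c)*(a-c)" by (simp add: algebra_simps)
    have "a + c \<noteq> 0" "a - c \<noteq> 0" using False unfolding f by auto
    define u where "u = 1/((a+c)*(a-c))"
    have ua: "u*(a-c) = 1/(a+c)" using \<open>a+c \<noteq> 0\<close> \<open>a-c \<noteq> 0\<close> unfolding u_def by simp
    have P: "pinv2 a c a = mg (a*u) (-c*u) (-c*u) (a*u)"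
      using False unfolding u_def f by (simp add: pinv2_def f)
    have "vec_of_list [b,b] \<bullet> (mp_inv (mg a c c a) *\<^sub>v vec_of_list [b,b]) = 2*b*b*(u*(a-c))"
      unfolding mp_inv_m2 P mg_mult_vec sp2 by (simp add: algebra_simps)
    then show ?thesis unfolding ua sc_pinv_def using \<open>a+c \<noteq> 0\<close> by simp
  next
    case True
    have f: "a*a - c*c = (a+c)*(a-c)" by (simp add: algebra_simps)
    show ?thesis
    proof (cases "a + c = 0")
      case T2: True
      have P: "pinv2 a c a = mg (a/(a+a)^2) (c/(a+a)^2) (c/(a+a)^2) (a/(a+a)^2)"
        using True by (simp add: pinv2_def)
      then show ?thesis using psd_F1[OF assms T2]
        unfolding mp_inv_m2 P mg_mult_vec sp2 sc_pinv_def by simp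
    next
      case F: False
      with True have "c = a" unfolding f by simp
      moreover have P: "pinv2 a c a = mg (a/(a+a)^2) (c/(a+a)^2) (c/(a+a)^2) (a/(a+a)^2)"
        using True by (simp add: pinv2_def)
      ultimately show ?thesis using F
        unfolding mp_inv_m2 P mg_mult_vec sp2 sc_pinv_def by (simp add: field_simps power2_eq_square)
    qed
  qed
  show ?thesis unfolding L R
  proof (cases "a + c = 0")
    case True
    then show "a + 4*lam*b + 2*lam*lam*(a+c) - (2*b+2*lam*(a+c))^2 * sc_pinv (2*(a+c)) = a - 2*b*b*sc_pinv (a+c)"
      using psd_F1[OF assms True] by (simp add: sc_pinv_def)
  next
    case False
    then show "a + 4*lam*b + 2*lam*lam*(a+c) - (2*b+2*lam*(a+c))^2 * sc_pinv (2*(a+c)) = a - 2*b*b*sc_pinv (a+c)"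
      by (simp add: sc_pinv_def field_simps power2_eq_square)
  qed
qed

definition Zq :: "real \<Rightarrow> real \<Rightarrow> real \<Rightarrow> real" where
  "Zq a b c = a - (2*(a-b))^2 * sc_pinv (6*a - 8*b + 2*c)"

lemma core3:
  fixes a b c lam :: real
  assumes "psd3 a b c"
  shows "qvec (V3 a b c) (vec_of_list [1, lam, lam]) (vec_of_list [2, -1, -1]) = (1+2*lam)^2 * Zq a b c"
proof -
  have L: "qvec (V3 a b c) (vec_of_list [1, lam, lam]) (vec_of_list [2, -1, -1])
     = a + 4*lam*b + 2*lam*lam*(a+c) - (2*(a-b)+2*lam*(2*b-a-c))^2 * sc_pinv (6*a - 8*b + 2*c)"
    unfolding qvec_def V3_mult_vec sp3 by (simp add: algebra_simps)
  show ?thesis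
  proof (cases "6*a - 8*b + 2*c = 0")
    case True
    then show ?thesis using psd_F2[OF assms True] unfolding L Zq_def
      by (simp add: sc_pinv_def power2_eq_square algebra_simps)
  next
    case False
    then show ?thesis unfolding L Zq_def sc_pinv_def
      by (simp add: field_simps power2_eq_square)
  qed
qed

lemma core4:
  fixes a b c l1 l2 :: real
  assumes psd: "psd3 a b c" and s0: "1 + l1 + l2 \<noteq> 0"
  shows "vec_of_list [1,l1,l2] \<bullet> (V3 a b c *\<^sub>v vec_of_list [1,l1,l2]) -
         (transpose_mat (mat_of_cols 3 [vec_of_list [-1, 1 + l2, -l2], vec_of_list [-1, -l1, 1 + l1]]) *\<^sub>v (V3 a b c *\<^sub>v vec_of_list [1,l1,l2])) \<bullet>
           (mp_inv (transpose_mat (mat_of_cols 3 [vec_of_list [-1, 1 + l2, -l2], vec_of_list [-1, -l1, 1 + l1]]) * V3 a b c * mat_of_cols 3 [vec_of_list [-1, 1 + l2, -l2], vec_of_list [-1, -l1, 1 + l1]]) *\<^sub>v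
             (transpose_mat (mat_of_cols 3 [vec_of_list [-1, 1 + l2, -l2], vec_of_list [-1, -l1, 1 + l1]]) *\<^sub>v (V3 a b c *\<^sub>v vec_of_list [1,l1,l2])))
       = (1+l1+l2)^2 * Zq a b c"
proof -
  define P where "P = vec_of_list [-1, 1 + l2, -l2]"
  define Q where "Q = vec_of_list [-1, -l1, 1 + l1]"
  define l where "l = vec_of_list [1,l1,l2]"
  define V where "V = V3 a b c"
  define al where "al = P \<bullet> (V *\<^sub>v P)"
  define be where "be = P \<bullet> (V *\<^sub>v Q)"
  define de where "de = Q \<bullet> (V *\<^sub>v Q)"
  define y1 where "y1 = P \<bullet> (V *\<^sub>v l)"
  define y2 where "y2 = Q \<bullet> (V *\<^sub>v l)"
  define q0 where "q0 = l \<bullet> (V *\<^sub>v l)"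
  define d1 where "d1 = 6*a - 8*b + 2*c"
  define d2 where "d2 = 2*(a-c)"
  define s where "s = 1 + l1 + l2"
  define uv where "uv = 2*(a-b) + (2*b-a-c)*(l1+l2)"
  have PQ: "P \<in> carrier_vec 3" "Q \<in> carrier_vec 3" "l \<in> carrier_vec 3" "V \<in> carrier_mat 3 3"
    unfolding P_def Q_def l_def V_def by (simp_all only: vol_carrier V3_carrier)
  have sym: "Q \<bullet> (V *\<^sub>v P) = be" unfolding be_def P_def Q_def V_def V3_mult_vec sp3
    by (simp add: algebra_simps)
  have M: "transpose_mat (mat_of_cols 3 [P,Q]) * V * mat_of_cols 3 [P,Q] = mg al be be de"
    unfolding LVL[OF PQ(1,2,4)] sym al_def de_def be_def ..
  have Y: "transpose_mat (mat_of_cols 3 [P,Q]) *\<^sub>v (V *\<^sub>v l) = vec_of_list [y1, y2]"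
    unfolding y1_def y2_def using PQ by (intro Lt_vec) auto
  have eqv: "?thesis \<longleftrightarrow> q0 - vec_of_list [y1, y2] \<bullet> (pinv2 al be de *\<^sub>v vec_of_list [y1, y2]) = s^2 * Zq a b c"
    unfolding P_def[symmetric] Q_def[symmetric] l_def[symmetric] V_def[symmetric] M Y mp_inv_m2
      q0_def[symmetric] s_def[symmetric] ..
  define g where "g = 2*(a-b)"
  define pp where "pp = 1 + 2*l2"
  define rr where "rr = 1 + 2*l1"
  define x where "x = -(l1+l2)/2"
  define yy where "yy = (l1-l2)/2"
  define U where "U = s*g + x*d1"
  define W where "W = yy*d2"
  have Fal: "al = (d1 + pp^2*d2)/4"
    unfolding al_def P_def V_def V3_mult_vec sp3 d1_def d2_def pp_def by (simp add: algebra_simps power2_eq_square)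
  have Fbe: "be = (d1 - pp*rr*d2)/4"
    unfolding be_def P_def Q_def V_def V3_mult_vec sp3 d1_def d2_def pp_def rr_def by (simp add: algebra_simps)
  have Fde: "de = (d1 + rr^2*d2)/4"
    unfolding de_def Q_def V_def V3_mult_vec sp3 d1_def d2_def rr_def by (simp add: algebra_simps power2_eq_square)
  have Fy1: "y1 = (-U + pp*W)/2"
    unfolding y1_def P_def V_def l_def V3_mult_vec sp3 U_def W_def s_def g_def x_def yy_def d1_def d2_def pp_def
    by (simp add: field_simps)
  have Fy2: "y2 = (-U - rr*W)/2"
    unfolding y2_def Q_def V_def l_def V3_mult_vec sp3 U_def W_def s_def g_def x_def yy_def d1_def d2_def rr_def
    by (simp add: field_simps)
  have Fq0: "q0 = s^2*a + 2*s*x*g + x^2*d1 + yy^2*d2"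
    unfolding q0_def V_def l_def V3_mult_vec sp3 s_def g_def x_def yy_def d1_def d2_def
    by (simp add: field_simps power2_eq_square)
  have pr: "pp + rr = 2*s" unfolding pp_def rr_def s_def by simp
  have Z: "Zq a b c = a - g^2 * sc_pinv d1" unfolding Zq_def g_def d1_def ..
  have main: "q0 - vec_of_list [y1, y2] \<bullet> (pinv2 al be de *\<^sub>v vec_of_list [y1, y2]) = s^2 * Zq a b c"
  proof (cases "d1 = 0")
    case True
    have ba: "b = a" "c = a" using psd_F2[OF psd] True unfolding d1_def by auto
    have d2: "d2 = 0" unfolding d2_def using ba by simp
    have g0: "g = 0" unfolding g_def using ba by simp
    have z: "al = 0" "be = 0" "de = 0" "y1 = 0" "y2 = 0"
      using True d2 g0 unfolding Fal Fbe Fde Fy1 Fy2 U_def W_def by simp_all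
    have P0: "pinv2 0 0 0 = mg 0 0 0 0" by (simp add: pinv2_def)
    show ?thesis unfolding z Z Fq0 P0 mg_mult_vec sp2 using True d2 g0
      by (simp add: sc_pinv_def)
  next
    case d1: False
    have Ue: "U^2/d1 = s^2*g^2/d1 + 2*s*x*g + x^2*d1" unfolding U_def using d1
      by (simp add: field_simps power2_eq_square)
    have fin: "q0 - (U^2/d1 + W^2 * sc_pinv d2) = s^2 * Zq a b c"
    proof (cases "d2 = 0")
      case True
      then show ?thesis unfolding Z Fq0 sc_pinv_def W_def using d1 Ue
        by (simp add: field_simps power2_eq_square)
    next
      case False
      then show ?thesis unfolding Z Fq0 sc_pinv_def W_def using d1 Ue
        by (simp add: field_simps power2_eq_square)
    qed
    have "vec_of_list [y1, y2] \<bullet> (pinv2 al be de *\<^sub>v vec_of_list [y1, y2]) = U^2/d1 + W^2 * sc_pinv d2"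
    proof (cases "d2 = 0")
      case True
      have e: "al = d1/4" "be = d1/4" "de = d1/4" "y1 = -U/2" "y2 = -U/2"
        unfolding Fal Fbe Fde Fy1 Fy2 W_def using True by simp_all
      have D: "al*de - be*be = 0" unfolding e by simp
      have P: "pinv2 al be de = mg (1/d1) (1/d1) (1/d1) (1/d1)"
        unfolding pinv2_def using D d1 unfolding e by (simp add: field_simps power2_eq_square)
      show ?thesis unfolding P mg_mult_vec sp2 unfolding e using True d1
        by (simp add: field_simps sc_pinv_def power2_eq_square)
    next
      case False
      have sne: "pp + rr \<noteq> 0" using s0 pr unfolding s_def by simp
      have D: "al*de - be*be = (pp+rr)^2*d1*d2/16"
        unfolding Fal Fbe Fde by (simp add: field_simps power2_eq_square)
      have Dn: "al*de - be*be \<noteq> 0" unfolding D using sne d1 False by simp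
      define DD where "DD = al*de - be*be"
      have P: "pinv2 al be de = mg (de/DD) (-be/DD) (-be/DD) (al/DD)"
        using Dn unfolding pinv2_def DD_def by simp
      have N: "16*(de*y1*y1 - 2*be*y1*y2 + al*y2*y2) = (pp+rr)^2*(d1*W^2 + d2*U^2)"
        unfolding Fal Fbe Fde Fy1 Fy2 by (simp add: field_simps power2_eq_square)
      have "vec_of_list [y1, y2] \<bullet> (pinv2 al be de *\<^sub>v vec_of_list [y1, y2]) = (de*y1*y1 - 2*be*y1*y2 + al*y2*y2)/DD"
        unfolding P mg_mult_vec sp2 using Dn unfolding DD_def[symmetric] by (simp add: field_simps)
      also have "\<dots> = (16*(de*y1*y1 - 2*be*y1*y2 + al*y2*y2))/(16*DD)"
        by (rule mult_divide_mult_cancel_left[symmetric]) simp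
      also have "\<dots> = ((pp+rr)^2*(d1*W^2 + d2*U^2)) / ((pp+rr)^2*(d1*d2))"
      proof -
        have D16: "16*DD = (pp+rr)^2*(d1*d2)" unfolding DD_def D by simp
        show ?thesis unfolding N D16 ..
      qed
      also have "\<dots> = (d1*W^2 + d2*U^2) / (d1*d2)"
        using sne by (intro mult_divide_mult_cancel_left) simp
      also have "\<dots> = U^2/d1 + W^2 * sc_pinv d2"
        using d1 False by (simp add: field_simps sc_pinv_def)
      finally show ?thesis .
    qed
    then show ?thesis using fin by simp
  qed
  show ?thesis using eqv main by blast
qed

definition Bc :: "nat \<Rightarrow> real mat" where
  "Bc k = 1\<^sub>m k - (1 / real k) \<cdot>\<^sub>m mat k k (\<lambda>_. 1)"

lemma PD_inverse:
  assumes "pos_def_mat k S"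
  obtains X where "X \<in> carrier_mat k k" "S * X = 1\<^sub>m k" "X * S = 1\<^sub>m k"
proof -
  have S: "S \<in> carrier_mat k k" using assms unfolding pos_def_mat_def by auto
  have "det S \<noteq> 0"
  proof
    assume "det S = 0"
    then obtain v where v: "v \<in> carrier_vec k" "v \<noteq> 0\<^sub>v k" "S *\<^sub>v v = 0\<^sub>v k"
      using det_0_iff_vec_prod_zero[OF S] by auto
    then have "v \<bullet> (S *\<^sub>v v) > 0" using assms unfolding pos_def_mat_def by auto
    moreover have "v \<bullet> (S *\<^sub>v v) = 0" using v by simp
    ultimately show False by simp
  qed
  from det_non_zero_imp_unit[OF S this, of "()"]
  obtain X where "X \<in> carrier_mat k k" "X * S = 1\<^sub>m k" "S * X = 1\<^sub>m k"
    unfolding Units_def ring_mat_def by auto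
  then show ?thesis using that by blast
qed

lemma minv_eq:
  assumes S: "S \<in> carrier_mat k k" and X: "X \<in> carrier_mat k k" and "S * X = 1\<^sub>m k" "X * S = 1\<^sub>m k"
  shows "minv S = X"
  unfolding minv_def
proof (rule the_equality)
  show "X \<in> carrier_mat (dim_row S) (dim_row S) \<and> S * X = 1\<^sub>m (dim_row S) \<and> X * S = 1\<^sub>m (dim_row S)"
    using assms by auto
  fix Y assume Y: "Y \<in> carrier_mat (dim_row S) (dim_row S) \<and> S * Y = 1\<^sub>m (dim_row S) \<and> Y * S = 1\<^sub>m (dim_row S)"
  then have Yc: "Y \<in> carrier_mat k k" using S by auto
  have "Y = Y * (S * X)" using assms Yc by simp
  also have "\<dots> = (Y * S) * X" using assms Yc by (simp add: assoc_mult_mat[OF Yc S X])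
  also have "\<dots> = X" using Y S X by simp
  finally show "Y = X" .
qed

lemma Bt_eq:
  assumes H: "type_H k S" and k: "k \<ge> 1"
  shows "Bt k S = Bc k"
proof -
  have pd: "pos_def_mat k S" using H unfolding type_H_def by auto
  then have S: "S \<in> carrier_mat k k" unfolding pos_def_mat_def by auto
  obtain eta where eta: "eta \<in> carrier_vec k"
    and Sdef: "S = 1\<^sub>m k + mat k k (\<lambda>(i, j). eta $ i) + mat k k (\<lambda>(i, j). eta $ j)"
    using H unfolding type_H_def by auto
  have Sij: "S $$ (i,j) = (if i = j then 1 else 0) + eta $ i + eta $ j" if "i < k" "j < k" for i j
    using that unfolding Sdef by simp
  obtain X where X: "X \<in> carrier_mat k k" and SX: "S * X = 1\<^sub>m k" and XS: "X * S = 1\<^sub>m k"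
    using PD_inverse[OF pd] by blast
  have mX: "minv S = X" by (rule minv_eq[OF S X SX XS])
  define one where "one = vec k (\<lambda>_. 1::real)"
  define J where "J = mat k k (\<lambda>_. 1::real)"
  define h where "h = X *\<^sub>v one"
  define c where "c = one \<bullet> h"
  define se where "se = (\<Sum>l<k. eta $ l)"
  define g where "g = vec k (\<lambda>i. (1+se)/real k - eta $ i)"
  define \<gamma> where "\<gamma> = (1+se)/real k + eta \<bullet> g"
  have one: "one \<in> carrier_vec k" unfolding one_def by simp
  have Jc: "J \<in> carrier_mat k k" unfolding J_def by simp
  have gc: "g \<in> carrier_vec k" unfolding g_def by simp
  have hc: "h \<in> carrier_vec k" unfolding h_def using X one by simp
  have sumg: "(\<Sum>i<k. g $ i) = 1"
  proof -
    have "(\<Sum>i<k. g $ i) = (\<Sum>i<k. (1+se)/real k) - se"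
      unfolding g_def se_def by (simp add: sum_subtractf)
    also have "\<dots> = 1" using k by simp
    finally show ?thesis .
  qed
  have Sg: "S *\<^sub>v g = \<gamma> \<cdot>\<^sub>v one"
  proof (rule eq_vecI)
    fix i assume "i < dim_vec (\<gamma> \<cdot>\<^sub>v one)"
    then have i: "i < k" unfolding one_def by simp
    have "(S *\<^sub>v g) $ i = (\<Sum>j<k. S $$ (i,j) * g $ j)"
      using i S gc unfolding mult_mat_vec_def scalar_prod_def by (simp add: lessThan_atLeast0)
    also have "\<dots> = (\<Sum>j<k. (if i = j then g $ j else 0) + eta $ i * g $ j + eta $ j * g $ j)"
      by (rule sum.cong) (auto simp: Sij i algebra_simps)
    also have "\<dots> = g $ i + eta $ i * (\<Sum>j<k. g $ j) + (\<Sum>j<k. eta $ j * g $ j)"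
      using i by (simp add: sum.distrib sum_distrib_left)
    also have "\<dots> = \<gamma>"
      unfolding sumg \<gamma>_def using i gc eta
      by (simp add: g_def scalar_prod_def lessThan_atLeast0)
    finally show "(S *\<^sub>v g) $ i = (\<gamma> \<cdot>\<^sub>v one) $ i" using i unfolding one_def by simp
  qed (use S in \<open>simp add: one_def\<close>)
  have gh: "g = \<gamma> \<cdot>\<^sub>v h"
  proof -
    have "g = (X * S) *\<^sub>v g" using XS gc by simp
    also have "\<dots> = X *\<^sub>v (S *\<^sub>v g)" using X S gc by simp
    also have "\<dots> = \<gamma> \<cdot>\<^sub>v h" unfolding Sg h_def using X one by (simp add: mult_mat_vec)
    finally show ?thesis .
  qed
  have "1 = one \<bullet> g" unfolding one_def using sumg gc by (simp add: scalar_prod_def lessThan_atLeast0)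
  also have "\<dots> = \<gamma> * c" unfolding gh c_def using one hc by simp
  finally have gc1: "\<gamma> * c = 1" by simp
  then have "c \<noteq> 0" by auto
  then have cinv: "1 / c = \<gamma>" using gc1 by (simp add: field_simps)
  have BtX: "Bt k S = X - \<gamma> \<cdot>\<^sub>m (X * J * X)"
    unfolding Bt_def mX cinv[symmetric] c_def h_def one_def J_def ..
  have BtS: "Bt k S * S = 1\<^sub>m k - \<gamma> \<cdot>\<^sub>m (X * J)"
  proof -
    have XJX: "X * J * X \<in> carrier_mat k k" using X Jc by simp
    have "Bt k S * S = X * S - (\<gamma> \<cdot>\<^sub>m (X * J * X)) * S"
      unfolding BtX by (rule minus_mult_distrib_mat[OF X _ S]) (use XJX in simp)
    also have "(\<gamma> \<cdot>\<^sub>m (X * J * X)) * S = \<gamma> \<cdot>\<^sub>m (X * J * X * S)"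
      by (rule mult_smult_assoc_mat[OF XJX S])
    also have "X * J * X * S = X * J * (X * S)" using X Jc S by (simp add: assoc_mult_mat[of _ k k _ k _ k])
    also have "\<dots> = X * J" using XS X Jc by simp
    finally show ?thesis using XS by simp
  qed
  have BcS: "Bc k * S = S - (1/real k) \<cdot>\<^sub>m (J * S)"
  proof -
    have "Bc k * S = 1\<^sub>m k * S - ((1/real k) \<cdot>\<^sub>m J) * S"
      unfolding Bc_def J_def[symmetric] by (rule minus_mult_distrib_mat[OF _ _ S]) (use Jc in auto)
    also have "((1/real k) \<cdot>\<^sub>m J) * S = (1/real k) \<cdot>\<^sub>m (J * S)" by (rule mult_smult_assoc_mat[OF Jc S])
    finally show ?thesis using S by simp
  qed
  have eqS: "Bt k S * S = Bc k * S"
  proof (rule eq_matI)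
    fix i j assume "i < dim_row (Bc k * S)" "j < dim_col (Bc k * S)"
    then have i: "i < k" and j: "j < k" using S by (auto simp: Bc_def)
    have XJ: "(X * J) $$ (i,j) = h $ i"
    proof -
      have "col J j = one" unfolding J_def one_def using j by (auto simp: col_def)
      then show ?thesis using i j X Jc unfolding h_def by simp
    qed
    have JS: "(J * S) $$ (i,j) = (\<Sum>l<k. S $$ (l,j))"
    proof -
      have "row J i = one" unfolding J_def one_def using i by (auto simp: row_def)
      then show ?thesis using i j S Jc unfolding one_def by (simp add: scalar_prod_def lessThan_atLeast0)
    qed
    have colsum: "(\<Sum>l<k. S $$ (l,j)) = 1 + se + real k * eta $ j"
    proof -
      have "(\<Sum>l<k. S $$ (l,j)) = (\<Sum>l<k. (if l = j then 1 else 0) + eta $ l + eta $ j)"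
        by (rule sum.cong) (auto simp: Sij j)
      also have "\<dots> = 1 + se + real k * eta $ j" using j unfolding se_def by (simp add: sum.distrib)
      finally show ?thesis .
    qed
    have ghi: "\<gamma> * h $ i = (1+se)/real k - eta $ i"
    proof -
      have "g $ i = \<gamma> * h $ i" using gh i hc by simp
      then show ?thesis unfolding g_def using i by simp
    qed
    have "(Bt k S * S) $$ (i,j) = (if i = j then 1 else 0) - \<gamma> * h $ i"
      unfolding BtS using i j X Jc XJ by simp
    also have "\<dots> = (if i = j then 1 else 0) + eta $ i + eta $ j - (1/real k) * (1 + se + real k * eta $ j)"
      unfolding ghi using k by (simp add: field_simps)
    also have "\<dots> = (Bc k * S) $$ (i,j)"
      unfolding BcS using i j S Jc JS colsum Sij[OF i j] by simp
    finally show "(Bt k S * S) $$ (i,j) = (Bc k * S) $$ (i,j)" .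
  qed (use S X in \<open>auto simp: Bc_def Bt_def mX\<close>)
  have Bcc: "Bc k \<in> carrier_mat k k" unfolding Bc_def by (rule minus_carrier_mat) simp
  have Btc: "Bt k S \<in> carrier_mat k k" unfolding BtX by (rule minus_carrier_mat) (use X Jc in simp)
  have "Bt k S = Bt k S * (S * X)" using SX Btc by simp
  also have "\<dots> = (Bt k S * S) * X" using Btc S X by simp
  also have "\<dots> = (Bc k * S) * X" unfolding eqS ..
  also have "\<dots> = Bc k" using Bcc S X SX by simp
  finally show ?thesis .
qed

lemma cs_sum:
  fixes m :: "nat \<Rightarrow> real"
  assumes k: "k > 0"
  shows "(\<Sum>u<k. m u)^2 \<le> real k * (\<Sum>u<k. (m u)^2)"
proof -
  define S where "S = (\<Sum>u<k. m u)"
  have "0 \<le> (\<Sum>u<k. (real k * m u - S)^2)" by (simp add: sum_nonneg)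
  also have "\<dots> = (\<Sum>u<k. (real k)^2 * (m u)^2) - 2 * real k * S * (\<Sum>u<k. m u) + real k * S^2"
    by (simp add: power2_diff sum.distrib sum_subtractf sum_distrib_left algebra_simps power2_eq_square)
  also have "\<dots> = real k * (real k * (\<Sum>u<k. (m u)^2) - S^2)"
    unfolding S_def by (simp add: sum_distrib_left[symmetric] power2_eq_square algebra_simps)
  finally have "0 \<le> real k * (real k * (\<Sum>u<k. (m u)^2) - S^2)" .
  then have "0 \<le> real k * (\<Sum>u<k. (m u)^2) - S^2" using k by (simp add: zero_le_mult_iff)
  then show ?thesis unfolding S_def by simp
qed

definition fB :: "nat \<Rightarrow> (nat \<Rightarrow> real) \<Rightarrow> (nat \<Rightarrow> real) \<Rightarrow> real" where
  "fB k v w = (\<Sum>u<k. v u * w u) - (1 / real k) * (\<Sum>u<k. v u) * (\<Sum>u<k. w u)"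

lemma fB_nonneg: "k > 0 \<Longrightarrow> fB k v v \<ge> 0"
  using cs_sum[of k v] unfolding fB_def by (simp add: power2_eq_square field_simps)

lemma trBc:
  assumes A: "A \<in> carrier_mat k t" and C: "C \<in> carrier_mat k t"
  shows "mtrace (transpose_mat A * Bc k * C) = (\<Sum>a<t. fB k (\<lambda>u. A $$ (u,a)) (\<lambda>u. C $$ (u,a)))"
proof -
  have Bcc: "Bc k \<in> carrier_mat k k" unfolding Bc_def by (rule minus_carrier_mat) simp
  have e: "(transpose_mat A * Bc k * C) $$ (a,a) = fB k (\<lambda>u. A $$ (u,a)) (\<lambda>u. C $$ (u,a))" if a: "a < t" for a
  proof -
    have "(transpose_mat A * Bc k * C) $$ (a,a) = (\<Sum>u<k. A $$ (u,a) * (\<Sum>v<k. Bc k $$ (u,v) * C $$ (v,a)))"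
      using A C Bcc a by (simp add: scalar_prod_def lessThan_atLeast0 sum_distrib_left sum_distrib_right)
    also have "\<dots> = (\<Sum>u<k. A $$ (u,a) * (C $$ (u,a) - (1/real k) * (\<Sum>v<k. C $$ (v,a))))"
    proof (rule sum.cong[OF refl])
      fix u assume u: "u \<in> {..<k}"
      have "(\<Sum>v<k. Bc k $$ (u,v) * C $$ (v,a)) = (\<Sum>v<k. (if u = v then C $$ (v,a) else 0) - (1/real k) * C $$ (v,a))"
        by (rule sum.cong) (use u in \<open>auto simp: Bc_def algebra_simps\<close>)
      also have "\<dots> = C $$ (u,a) - (1/real k) * (\<Sum>v<k. C $$ (v,a))"
        using u by (simp add: sum_subtractf sum_distrib_left)
      finally show "A $$ (u,a) * (\<Sum>v<k. Bc k $$ (u,v) * C $$ (v,a)) = A $$ (u,a) * (C $$ (u,a) - (1/real k) * (\<Sum>v<k. C $$ (v,a)))"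
        by simp
    qed
    also have "\<dots> = fB k (\<lambda>u. A $$ (u,a)) (\<lambda>u. C $$ (u,a))"
      unfolding fB_def by (simp add: algebra_simps sum_subtractf sum_distrib_left sum_distrib_right)
    finally show ?thesis .
  qed
  have "mtrace (transpose_mat A * Bc k * C) = (\<Sum>a<t. (transpose_mat A * Bc k * C) $$ (a,a))"
    unfolding mtrace_def using A by simp
  also have "\<dots> = (\<Sum>a<t. fB k (\<lambda>u. A $$ (u,a)) (\<lambda>u. C $$ (u,a)))"
    by (rule sum.cong) (auto simp: e)
  finally show ?thesis .
qed

lemma fB_lin1: "fB k (\<lambda>u. x * v u + w u) q = x * fB k v q + fB k w q"
  unfolding fB_def by (simp add: sum.distrib sum_distrib_left sum_divide_distrib algebra_simps)

lemma fB_lin2: "fB k q (\<lambda>u. x * v u + w u) = x * fB k q v + fB k q w"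
  unfolding fB_def by (simp add: sum.distrib sum_distrib_left sum_divide_distrib algebra_simps)

lemma fB_lin1': "fB k (\<lambda>u. x * v u) q = x * fB k v q"
  unfolding fB_def by (simp add: sum.distrib sum_distrib_left sum_divide_distrib algebra_simps)

lemma fB_lin2': "fB k q (\<lambda>u. x * v u) = x * fB k q v"
  unfolding fB_def by (simp add: sum.distrib sum_distrib_left sum_divide_distrib algebra_simps)

lemma quadB:
  assumes G0: "G0 \<in> carrier_mat k t" and G1: "G1 \<in> carrier_mat k t" and G2: "G2 \<in> carrier_mat k t"
    and k: "k > 0"
  shows "x*x*mtrace (transpose_mat G0 * Bc k * G0) + y*y*mtrace (transpose_mat G1 * Bc k * G1)
    + z*z*mtrace (transpose_mat G2 * Bc k * G2)
    + x*y*(mtrace (transpose_mat G0 * Bc k * G1) + mtrace (transpose_mat G1 * Bc k * G0))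
    + x*z*(mtrace (transpose_mat G0 * Bc k * G2) + mtrace (transpose_mat G2 * Bc k * G0))
    + y*z*(mtrace (transpose_mat G1 * Bc k * G2) + mtrace (transpose_mat G2 * Bc k * G1)) \<ge> 0"
proof -
  define m where "m a u = x * G0 $$ (u,a) + (y * G1 $$ (u,a) + z * G2 $$ (u,a))" for a u
  have e: "fB k (m a) (m a) = x*x*fB k (\<lambda>u. G0 $$ (u,a)) (\<lambda>u. G0 $$ (u,a))
     + y*y*fB k (\<lambda>u. G1 $$ (u,a)) (\<lambda>u. G1 $$ (u,a)) + z*z*fB k (\<lambda>u. G2 $$ (u,a)) (\<lambda>u. G2 $$ (u,a))
     + x*y*(fB k (\<lambda>u. G0 $$ (u,a)) (\<lambda>u. G1 $$ (u,a)) + fB k (\<lambda>u. G1 $$ (u,a)) (\<lambda>u. G0 $$ (u,a)))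
     + x*z*(fB k (\<lambda>u. G0 $$ (u,a)) (\<lambda>u. G2 $$ (u,a)) + fB k (\<lambda>u. G2 $$ (u,a)) (\<lambda>u. G0 $$ (u,a)))
     + y*z*(fB k (\<lambda>u. G1 $$ (u,a)) (\<lambda>u. G2 $$ (u,a)) + fB k (\<lambda>u. G2 $$ (u,a)) (\<lambda>u. G1 $$ (u,a)))" for a
    unfolding m_def fB_lin1 fB_lin2 fB_lin1' fB_lin2' by (simp add: algebra_simps)
  have "0 \<le> (\<Sum>a<t. fB k (m a) (m a))" by (rule sum_nonneg) (use fB_nonneg[OF k] in auto)
  then show ?thesis
    unfolding e trBc[OF G0 G0] trBc[OF G0 G1] trBc[OF G0 G2] trBc[OF G1 G0] trBc[OF G1 G1]
      trBc[OF G1 G2] trBc[OF G2 G0] trBc[OF G2 G1] trBc[OF G2 G2]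
    by (simp add: sum.distrib sum_distrib_left distrib_left)
qed

lemma sig_iff:
  fixes i k l :: nat
  assumes i: "i < k" and l: "l < k"
  shows "(i = (l+1) mod k) \<longleftrightarrow> (l = (i+k-1) mod k)"
proof (cases "i = 0")
  case True
  have "(k - 1) mod k = k - 1" using l by simp
  moreover have "(l+1) mod k = 0 \<longleftrightarrow> l + 1 = k" using l
    by (metis Suc_eq_plus1 Suc_lessI less_not_refl mod_less mod_self nat.distinct(1))
  ultimately show ?thesis using True l by auto
next
  case False
  have e: "(i+k-1) mod k = i - 1" using False i
    by (metis Nat.add_diff_assoc2 add.commute less_imp_diff_less mod_add_self1 mod_less One_nat_def Suc_leI neq0_conv)
  have "(l+1) mod k = l + 1 \<or> l + 1 = k" using l
    by (metis Suc_eq_plus1 Suc_lessI mod_less)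
  then show ?thesis unfolding e using False i l by auto
qed

lemma Hmat_idx: "i < k \<Longrightarrow> j < k \<Longrightarrow> Hmat k $$ (i,j) = (if i = (j+1) mod k then 1 else 0)"
  unfolding Hmat_def by simp

lemma Hmat_carrier[simp]: "Hmat k \<in> carrier_mat k k" unfolding Hmat_def by simp

lemma Hmat_dims[simp]: "dim_row (Hmat k) = k" "dim_col (Hmat k) = k" unfolding Hmat_def by simp_all

lemma sum_sig1:
  fixes i k :: nat
  assumes i: "i < k"
  shows "(\<Sum>l<k. (if i = (l+1) mod k then F l else 0)) = (F ((i+k-1) mod k) :: real)"
proof -
  have "(\<Sum>l<k. (if i = (l+1) mod k then F l else 0)) = (\<Sum>l<k. (if l = (i+k-1) mod k then F l else 0))"
    by (rule sum.cong) (use sig_iff[OF i] in auto)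
  also have "\<dots> = F ((i+k-1) mod k)" using i by (simp add: sum.delta)
  finally show ?thesis .
qed

lemma sum_sig2:
  fixes j k :: nat
  assumes j: "j < k"
  shows "(\<Sum>i<k. (if i = (j+1) mod k then F i else 0)) = (F ((j+1) mod k) :: real)"
proof -
  have "(j+1) mod k < k" using j by (intro mod_less_divisor) simp
  then show ?thesis by (simp add: sum.delta)
qed

lemma mult_idx:
  assumes A: "A \<in> carrier_mat n k" and B: "B \<in> carrier_mat k m" and i: "i < n" and j: "j < m"
  shows "(A * B) $$ (i,j) = (\<Sum>l<k. A $$ (i,l) * (B $$ (l,j) :: real))"
  using A B i j by (simp add: scalar_prod_def lessThan_atLeast0)

lemma sig_inj:
  fixes i j k :: nat
  assumes "i < k" "j < k" "(i+1) mod k = (j+1) mod k" shows "i = j"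
proof -
  have m: "(j+1) mod k < k" using assms by (intro mod_less_divisor) simp
  have "i = ((j+1) mod k + k - 1) mod k" using sig_iff[OF m assms(1)] assms(3) by simp
  moreover have "j = ((j+1) mod k + k - 1) mod k" using sig_iff[OF m assms(2)] by simp
  ultimately show ?thesis by simp
qed

lemma HtH: "transpose_mat (Hmat k) * Hmat k = 1\<^sub>m k"
proof (rule eq_matI)
  fix i j assume "i < dim_row (1\<^sub>m k)" "j < dim_col (1\<^sub>m k)"
  then have i: "i < k" and j: "j < k" by auto
  have "(transpose_mat (Hmat k) * Hmat k) $$ (i,j) = (\<Sum>l<k. Hmat k $$ (l,i) * Hmat k $$ (l,j))"
    using i j by (subst mult_idx[of _ k k _ k]) (auto intro!: sum.cong)
  also have "\<dots> = (\<Sum>l<k. if l = (i+1) mod k then Hmat k $$ (l,j) else 0)"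
    by (rule sum.cong) (use i in \<open>auto simp: Hmat_idx\<close>)
  also have "\<dots> = Hmat k $$ ((i+1) mod k, j)" by (rule sum_sig2[OF i])
  also have "\<dots> = (if i = j then 1 else 0)"
  proof -
    have m: "(i+1) mod k < k" using i by (intro mod_less_divisor) simp
    show ?thesis unfolding Hmat_idx[OF m j] using sig_inj[OF i j] by auto
  qed
  finally show "(transpose_mat (Hmat k) * Hmat k) $$ (i,j) = 1\<^sub>m k $$ (i,j)" using i j by simp
qed auto

lemma HHt: "Hmat k * transpose_mat (Hmat k) = 1\<^sub>m k"
proof (rule eq_matI)
  fix i j assume "i < dim_row (1\<^sub>m k)" "j < dim_col (1\<^sub>m k)"
  then have i: "i < k" and j: "j < k" by auto
  have "(Hmat k * transpose_mat (Hmat k)) $$ (i,j) = (\<Sum>l<k. Hmat k $$ (i,l) * Hmat k $$ (j,l))"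
    using i j by (subst mult_idx[of _ k k _ k]) (auto intro!: sum.cong)
  also have "\<dots> = (\<Sum>l<k. if i = (l+1) mod k then Hmat k $$ (j,l) else 0)"
    by (rule sum.cong) (use i in \<open>auto simp: Hmat_idx\<close>)
  also have "\<dots> = Hmat k $$ (j, (i+k-1) mod k)" by (rule sum_sig1[OF i])
  also have "\<dots> = (if i = j then 1 else 0)"
  proof -
    have m: "(i+k-1) mod k < k" using i by (intro mod_less_divisor) simp
    have "i = ((i+k-1) mod k + 1) mod k" using sig_iff[OF i m] by simp
    then show ?thesis unfolding Hmat_idx[OF j m] by auto
  qed
  finally show "(Hmat k * transpose_mat (Hmat k)) $$ (i,j) = 1\<^sub>m k $$ (i,j)" using i j by simp
qed auto

lemma HJ: "Hmat k * mat k k (\<lambda>_. 1) = mat k k (\<lambda>_. 1)"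
proof (rule eq_matI)
  fix i j assume "i < dim_row (mat k k (\<lambda>_. 1::real))" "j < dim_col (mat k k (\<lambda>_. 1::real))"
  then have i: "i < k" and j: "j < k" by auto
  have "(Hmat k * mat k k (\<lambda>_. 1)) $$ (i,j) = (\<Sum>l<k. Hmat k $$ (i,l) * 1)"
    using i j by (subst mult_idx[of _ k k _ k]) (auto intro!: sum.cong)
  also have "\<dots> = (\<Sum>l<k. if i = (l+1) mod k then 1 else 0)"
    by (rule sum.cong) (use i in \<open>auto simp: Hmat_idx\<close>)
  also have "\<dots> = 1" using sum_sig1[OF i, of "\<lambda>_. 1"] by simp
  finally show "(Hmat k * mat k k (\<lambda>_. 1)) $$ (i,j) = mat k k (\<lambda>_. 1::real) $$ (i,j)" using i j by simp
qed auto

lemma JH: "mat k k (\<lambda>_. 1) * Hmat k = mat k k (\<lambda>_. 1)"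
proof (rule eq_matI)
  fix i j assume "i < dim_row (mat k k (\<lambda>_. 1::real))" "j < dim_col (mat k k (\<lambda>_. 1::real))"
  then have i: "i < k" and j: "j < k" by auto
  have "(mat k k (\<lambda>_. 1) * Hmat k) $$ (i,j) = (\<Sum>l<k. 1 * Hmat k $$ (l,j))"
    using i j by (subst mult_idx[of _ k k _ k]) (auto intro!: sum.cong)
  also have "\<dots> = (\<Sum>l<k. if l = (j+1) mod k then 1 else 0)"
    by (rule sum.cong) (use j in \<open>auto simp: Hmat_idx\<close>)
  also have "\<dots> = 1" using sum_sig2[OF j, of "\<lambda>_. 1"] by simp
  finally show "(mat k k (\<lambda>_. 1) * Hmat k) $$ (i,j) = mat k k (\<lambda>_. 1::real) $$ (i,j)" using i j by simp
qed auto

lemma Bc_carrier[simp]: "Bc k \<in> carrier_mat k k" unfolding Bc_def by (rule minus_carrier_mat) simp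

lemma Bc_sym: "transpose_mat (Bc k) = Bc k"
  by (rule eq_matI) (auto simp: Bc_def)

lemma HB: "Hmat k * Bc k = Bc k * Hmat k"
proof -
  have J: "mat k k (\<lambda>_. 1::real) \<in> carrier_mat k k" by simp
  have "Hmat k * Bc k = Hmat k * 1\<^sub>m k - Hmat k * ((1 / real k) \<cdot>\<^sub>m mat k k (\<lambda>_. 1))"
    unfolding Bc_def by (rule mult_minus_distrib_mat[of _ k k]) auto
  also have "\<dots> = Hmat k - (1 / real k) \<cdot>\<^sub>m mat k k (\<lambda>_. 1)"
    by (simp add: mult_smult_distrib[OF Hmat_carrier J] HJ)
  also have "\<dots> = 1\<^sub>m k * Hmat k - ((1 / real k) \<cdot>\<^sub>m mat k k (\<lambda>_. 1)) * Hmat k"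
    by (simp add: mult_smult_assoc_mat[OF J Hmat_carrier] JH)
  also have "\<dots> = Bc k * Hmat k"
    unfolding Bc_def by (rule minus_mult_distrib_mat[symmetric, of _ k k]) auto
  finally show ?thesis .
qed

lemma HtB: "transpose_mat (Hmat k) * Bc k = Bc k * transpose_mat (Hmat k)"
proof -
  have "transpose_mat (Hmat k) * Bc k = transpose_mat (Bc k * Hmat k)"
    by (simp add: transpose_mult[of _ k k _ k] Bc_sym)
  also have "\<dots> = transpose_mat (Hmat k * Bc k)" by (simp add: HB)
  also have "\<dots> = Bc k * transpose_mat (Hmat k)"
    by (simp add: transpose_mult[of _ k k _ k] Bc_sym)
  finally show ?thesis .
qed

lemma L1:
  assumes A: "A \<in> carrier_mat k t" and C: "C \<in> carrier_mat k t"
  shows "transpose_mat (transpose_mat A * Bc k * C) = transpose_mat C * Bc k * A"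
proof -
  have "transpose_mat (transpose_mat A * Bc k * C) = transpose_mat C * transpose_mat (transpose_mat A * Bc k)"
    by (rule transpose_mult[of _ t k]) (use A C in auto)
  also have "transpose_mat (transpose_mat A * Bc k) = transpose_mat (Bc k) * A"
    using transpose_mult[of "transpose_mat A" t k "Bc k" k] A by simp
  finally show ?thesis using A C
    by (simp add: Bc_sym assoc_mult_mat[of "transpose_mat C" t k "Bc k" k A t])
qed

lemma L2:
  assumes T: "T \<in> carrier_mat k t" and H: "H \<in> carrier_mat k k"
    and HB: "transpose_mat H * (Bc k * H) = Bc k"
  shows "transpose_mat (H * T) * Bc k * (H * T) = transpose_mat T * Bc k * T"
proof -
  let ?B = "Bc k"
  have Ht: "transpose_mat H \<in> carrier_mat k k" using H by simp
  have Tt: "transpose_mat T \<in> carrier_mat t k" using T by simp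
  have B: "?B \<in> carrier_mat k k" by simp
  have HT: "H * T \<in> carrier_mat k t" using H T by simp
  have "transpose_mat (H * T) = transpose_mat T * transpose_mat H"
    by (rule transpose_mult[of _ k k]) (use T H in auto)
  then have "transpose_mat (H * T) * ?B * (H * T) = ((transpose_mat T * transpose_mat H) * ?B) * (H * T)" by simp
  also have "\<dots> = (transpose_mat T * transpose_mat H) * (?B * (H * T))"
    by (rule assoc_mult_mat[OF mult_carrier_mat[OF Tt Ht] B HT])
  also have "\<dots> = transpose_mat T * (transpose_mat H * (?B * (H * T)))"
    by (rule assoc_mult_mat[OF Tt Ht mult_carrier_mat[OF B HT]])
  also have "?B * (H * T) = (?B * H) * T" by (rule assoc_mult_mat[OF B H T, symmetric])
  also have "transpose_mat H * ((?B * H) * T) = (transpose_mat H * (?B * H)) * T"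
    by (rule assoc_mult_mat[OF Ht mult_carrier_mat[OF B H] T, symmetric])
  also have "\<dots> = ?B * T" unfolding HB ..
  also have "transpose_mat T * (?B * T) = transpose_mat T * ?B * T"
    by (rule assoc_mult_mat[OF Tt B T, symmetric])
  finally show ?thesis .
qed

lemma HtBH: "transpose_mat (Hmat k) * (Bc k * Hmat k) = Bc k"
proof -
  have "transpose_mat (Hmat k) * (Bc k * Hmat k) = transpose_mat (Hmat k) * (Hmat k * Bc k)" by (simp add: HB)
  also have "\<dots> = (transpose_mat (Hmat k) * Hmat k) * Bc k"
    by (rule assoc_mult_mat[symmetric, of _ k k _ k _ k]) auto
  also have "\<dots> = Bc k" by (simp add: HtH left_mult_one_mat[OF Bc_carrier])
  finally show ?thesis .
qed

lemma HBHt: "transpose_mat (transpose_mat (Hmat k)) * (Bc k * transpose_mat (Hmat k)) = Bc k"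
proof -
  have "transpose_mat (transpose_mat (Hmat k)) * (Bc k * transpose_mat (Hmat k)) = Hmat k * (transpose_mat (Hmat k) * Bc k)"
    by (simp add: HtB)
  also have "\<dots> = (Hmat k * transpose_mat (Hmat k)) * Bc k"
    by (rule assoc_mult_mat[symmetric, of _ k k _ k _ k]) auto
  also have "\<dots> = Bc k" by (simp add: HHt left_mult_one_mat[OF Bc_carrier])
  finally show ?thesis .
qed

lemma mtrace_transpose: "A \<in> carrier_mat n n \<Longrightarrow> mtrace (transpose_mat A) = mtrace A"
  unfolding mtrace_def by simp

lemma L4:
  assumes T: "T \<in> carrier_mat k t"
  shows "transpose_mat (transpose_mat T * Bc k * (transpose_mat (Hmat k) * T)) = transpose_mat T * Bc k * (Hmat k * T)"
proof -
  let ?B = "Bc k" and ?H = "Hmat k"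
  have Tt: "transpose_mat T \<in> carrier_mat t k" using T by simp
  have B: "?B \<in> carrier_mat k k" by simp
  have H: "?H \<in> carrier_mat k k" by simp
  have HtT: "transpose_mat ?H * T \<in> carrier_mat k t" using T by (intro mult_carrier_mat[of _ k k]) auto
  have "transpose_mat (transpose_mat T * ?B * (transpose_mat ?H * T)) = transpose_mat (transpose_mat ?H * T) * ?B * T"
    by (rule L1[OF T HtT])
  also have "transpose_mat (transpose_mat ?H * T) = transpose_mat T * ?H"
    using transpose_mult[of "transpose_mat ?H" k k T t] T by simp
  also have "(transpose_mat T * ?H) * ?B * T = transpose_mat T * (?H * (?B * T))"
    using assoc_mult_mat[OF mult_carrier_mat[OF Tt H] B T] assoc_mult_mat[OF Tt H mult_carrier_mat[OF B T]] by simp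
  also have "?H * (?B * T) = (?B * ?H) * T"
    using assoc_mult_mat[OF H B T] HB by simp
  also have "\<dots> = ?B * (?H * T)" by (rule assoc_mult_mat[OF B H T])
  also have "transpose_mat T * (?B * (?H * T)) = transpose_mat T * ?B * (?H * T)"
    by (rule assoc_mult_mat[OF Tt B mult_carrier_mat[OF H T], symmetric])
  finally show ?thesis .
qed

lemma Gmat_carrier[simp]: "Gmat k t s i \<in> carrier_mat k t"
  unfolding Gmat_def Tmat_def by (auto intro!: mult_carrier_mat[of _ k k])

lemma struct_s:
  fixes t k :: nat and s :: "nat list" and x y z :: real
  assumes B: "Bt k S = Bc k" and k: "k > 0"
  defines "\<tau> \<equiv> \<lambda>i j. mtrace (Cs k t S s i j)"
  shows "\<tau> 1 1 = \<tau> 0 0" "\<tau> 2 2 = \<tau> 0 0" "\<tau> 0 2 = \<tau> 0 1" "\<tau> 1 0 = \<tau> 0 1" "\<tau> 2 0 = \<tau> 0 1"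
    "\<tau> 2 1 = \<tau> 1 2"
    "\<tau> 0 0 * (x*x+y*y+z*z) + 2 * \<tau> 0 1 * (x*y+x*z) + 2 * \<tau> 1 2 * (y*z) \<ge> 0"
proof -
  define T where "T = Tmat k t s"
  have T: "T \<in> carrier_mat k t" unfolding T_def Tmat_def by simp
  have G0: "Gmat k t s 0 = T" and G1: "Gmat k t s 1 = Hmat k * T" and G2: "Gmat k t s 2 = transpose_mat (Hmat k) * T"
    unfolding Gmat_def T_def by auto
  have C: "Cs k t S s i j = transpose_mat (Gmat k t s i) * Bc k * Gmat k t s j" for i j
    unfolding Cs_def B ..
  have Cc: "Cs k t S s i j \<in> carrier_mat t t" for i j unfolding C
    by (rule mult_carrier_mat[of _ t k]) (auto intro!: mult_carrier_mat[of _ t k])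
  have sym: "\<tau> j i = \<tau> i j" for i j
  proof -
    have "\<tau> j i = mtrace (transpose_mat (Cs k t S s i j))"
      unfolding \<tau>_def C using L1[OF Gmat_carrier Gmat_carrier] by simp
    also have "\<dots> = \<tau> i j" unfolding \<tau>_def using mtrace_transpose[OF Cc] .
    finally show ?thesis .
  qed
  show t11: "\<tau> 1 1 = \<tau> 0 0" unfolding \<tau>_def C G0 G1 L2[OF T Hmat_carrier HtBH] ..
  show t22: "\<tau> 2 2 = \<tau> 0 0" unfolding \<tau>_def C G0 G2
    using L2[OF T _ HBHt] by simp
  show t02: "\<tau> 0 2 = \<tau> 0 1"
  proof -
    have "\<tau> 0 2 = mtrace (transpose_mat (Cs k t S s 0 2))" unfolding \<tau>_def using mtrace_transpose[OF Cc] by simp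
    also have "\<dots> = \<tau> 0 1" unfolding \<tau>_def C G0 G1 G2 L4[OF T] ..
    finally show ?thesis .
  qed
  show "\<tau> 1 0 = \<tau> 0 1" "\<tau> 2 0 = \<tau> 0 1" "\<tau> 2 1 = \<tau> 1 2" using sym t02 by auto
  have q: "x*x*\<tau> 0 0 + y*y*\<tau> 1 1 + z*z*\<tau> 2 2 + x*y*(\<tau> 0 1 + \<tau> 1 0) + x*z*(\<tau> 0 2 + \<tau> 2 0)
      + y*z*(\<tau> 1 2 + \<tau> 2 1) \<ge> 0"
    unfolding \<tau>_def C by (rule quadB[OF Gmat_carrier Gmat_carrier Gmat_carrier k])
  then show "\<tau> 0 0 * (x*x+y*y+z*z) + 2 * \<tau> 0 1 * (x*y+x*z) + 2 * \<tau> 1 2 * (y*z) \<ge> 0"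
    using t11 t22 t02 sym[of 1 0] sym[of 2 0] sym[of 2 1] by (simp add: algebra_simps)
qed

lemma cxi_sum: "cxi k t S p i j = (\<Sum>s\<in>seqs k t. p s * mtrace (Cs k t S s i j))"
proof -
  have d: "dim_row (Cs k t S s i j) = t" for s unfolding Cs_def using carrier_matD(2)[OF Gmat_carrier[of k t s i]] by simp
  have "cxi k t S p i j = (\<Sum>a<t. \<Sum>s\<in>seqs k t. p s * Cs k t S s i j $$ (a,a))"
    unfolding cxi_def mtrace_def Cxi_def by simp
  also have "\<dots> = (\<Sum>s\<in>seqs k t. \<Sum>a<t. p s * Cs k t S s i j $$ (a,a))" by (rule sum.swap)
  also have "\<dots> = (\<Sum>s\<in>seqs k t. p s * mtrace (Cs k t S s i j))"
    unfolding mtrace_def d by (simp add: sum_distrib_left)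
  finally show ?thesis .
qed

theorem lemma2:
  fixes k t :: nat and S :: "real mat" and p :: "nat list \<Rightarrow> real"
    and lam lam1 lam2 :: real
  assumes "k \<ge> 2" and "t \<ge> 2"
    and "type_H k S"
    and "is_measure k t p"
  shows "qstar2 k t S p lam = qstar k t S p \<and>
    (1 + 2 * lam \<noteq> 0 \<and> 1 + lam1 + lam2 \<noteq> 0 \<longrightarrow>
       qstar3 k t S p lam / (1 + 2 * lam)^2 = qstar1 k t S p lam1 lam2 / (1 + lam1 + lam2)^2)"
proof -
  have k: "k > 0" using assms(1) by simp
  have B: "Bt k S = Bc k" using Bt_eq[OF assms(3)] assms(1) by simp
  have pnn: "p s \<ge> 0" if "s \<in> seqs k t" for s using assms(4) that unfolding is_measure_def by auto
  define a where "a = cxi k t S p 0 0"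
  define b where "b = cxi k t S p 0 1"
  define c where "c = cxi k t S p 1 2"
  note st = struct_s[OF B k]
  have c11: "cxi k t S p 1 1 = a" unfolding a_def cxi_sum using st(1) by simp
  have c22: "cxi k t S p 2 2 = a" unfolding a_def cxi_sum using st(2) by simp
  have c02: "cxi k t S p 0 2 = b" unfolding b_def cxi_sum using st(3) by simp
  have c10: "cxi k t S p 1 0 = b" unfolding b_def cxi_sum using st(4) by simp
  have c20: "cxi k t S p 2 0 = b" unfolding b_def cxi_sum using st(5) by simp
  have c21: "cxi k t S p 2 1 = c" unfolding c_def cxi_sum using st(6) by simp
  have psd: "psd3 a b c"
    unfolding psd3_def
  proof (intro allI)
    fix x y z :: real
    have "a*(x*x+y*y+z*z) + 2*b*(x*y+x*z) + 2*c*(y*z) =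
      (\<Sum>s\<in>seqs k t. p s * (mtrace (Cs k t S s 0 0) * (x*x+y*y+z*z) + 2 * mtrace (Cs k t S s 0 1) * (x*y+x*z)
         + 2 * mtrace (Cs k t S s 1 2) * (y*z)))"
      unfolding a_def b_def c_def cxi_sum by (simp add: sum_distrib_left sum.distrib algebra_simps)
    also have "\<dots> \<ge> 0"
      by (rule sum_nonneg) (use pnn st(7) in \<open>auto intro!: mult_nonneg_nonneg\<close>)
    finally show "a*(x*x+y*y+z*z) + 2*b*(x*y+x*z) + 2*c*(y*z) \<ge> 0" .
  qed
  have sc: "cxi k t S p 0 (Suc 0) = b" "cxi k t S p (Suc 0) 0 = b" "cxi k t S p (Suc 0) (Suc 0) = a"
    "cxi k t S p (Suc 0) 2 = c" "cxi k t S p 2 (Suc 0) = c"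
    using b_def c10 c11 c_def c21 by simp_all
  have sc2: "cxi k t S p (Suc 0) (Suc (Suc 0)) = c" "cxi k t S p (Suc (Suc 0)) (Suc 0) = c"
    "cxi k t S p (Suc (Suc 0)) (Suc (Suc 0)) = a"
    using c_def c21 c22 by (simp_all add: numeral_2_eq_2)
  have V: "Vxi k t S p = V3 a b c"
    by (rule eq_matI) (auto simp: Vxi_def V3_def lt3 a_def[symmetric] b_def[symmetric] c_def[symmetric] c11 c22 c02 c10 c20 c21 sc)
  have Q: "Qxi k t S p = mg a c c a"
    by (rule eq_matI) (auto simp: Qxi_def mg_def lt2 c_def[symmetric] c11 c22 c21 sc sc2)
  have q: "qstar k t S p = a - vec_of_list [b,b] \<bullet> (mp_inv (mg a c c a) *\<^sub>v vec_of_list [b,b])"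
    unfolding qstar_def Q c02 c10 c20 a_def[symmetric] b_def[symmetric] ..
  have q2: "qstar2 k t S p lam = qstar k t S p"
    unfolding q qstar2_def V using core1[OF psd] .
  have q3: "qstar3 k t S p lam = (1+2*lam)^2 * Zq a b c"
    unfolding qstar3_def V using core3[OF psd] .
  have q1: "1 + lam1 + lam2 \<noteq> 0 \<Longrightarrow> qstar1 k t S p lam1 lam2 = (1+lam1+lam2)^2 * Zq a b c"
    unfolding qstar1_def V Let_def by (rule core4[OF psd])
  show ?thesis using q2 q3 q1 by auto
qed

end
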